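(* Let $G$ be a graph with $n$ vertices and let $q>0$. It is possible to delete at most $qn^2$ edges from $G$ to obtain a subgraph all of whose connected components are $q$-cut-dense.
   Context: A graph $F$ is $q$-cut-dense if for every partition $V(F)=A\cup B$ into disjoint sets, the number of edges of $F$ between $A$ and $B$ is at least $q|A||B|$. *)

theory Defs
  imports Complex_Main
begin

definition simple_graph :: "'a set \<Rightarrow> 'a set set \<Rightarrow> bool" where
  "simple_graph V E \<longleftrightarrow> finite V \<and> (\<forall>e\<in>E. e \<subseteq> V \<and> card e = 2)"

definition cut_edges :: "'a set set \<Rightarrow> 'a set \<Rightarrow> 'a set \<Rightarrow> 'a set set" where
  "cut_edges F A B = {e \<in> F. \<exists>u\<in>A. \<exists>v\<in>B. e = {u, v}}"

definition cut_dense :: "real \<Rightarrow> 'a set \<Rightarrow> 'a set set \<Rightarrow> bool" where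
  "cut_dense q V F \<longleftrightarrow>
     (\<forall>A B. A \<union> B = V \<and> A \<inter> B = {} \<longrightarrow>
        real (card (cut_edges F A B)) \<ge> q * real (card A) * real (card B))"

definition adjacent :: "'a set set \<Rightarrow> 'a \<Rightarrow> 'a \<Rightarrow> bool" where
  "adjacent F u v \<longleftrightarrow> {u, v} \<in> F"

definition component :: "'a set \<Rightarrow> 'a set set \<Rightarrow> 'a \<Rightarrow> 'a set" where
  "component V F v = {u \<in> V. (adjacent F)\<^sup>*\<^sup>* v u}"

definition components :: "'a set \<Rightarrow> 'a set set \<Rightarrow> 'a set set" where
  "components V F = component V F ` V"

definition induced_edges :: "'a set set \<Rightarrow> 'a set \<Rightarrow> 'a set set" where
  "induced_edges F C = {e \<in> F. e \<subseteq> C}"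

end

theory Submission
  imports Defs
begin

lemma adj_sym: "adjacent F u v \<Longrightarrow> adjacent F v u"
  by (simp add: adjacent_def insert_commute)

lemma reach_sym: "(adjacent F)\<^sup>*\<^sup>* u v \<Longrightarrow> (adjacent F)\<^sup>*\<^sup>* v u"
proof (induction rule: rtranclp_induct)
  case base then show ?case by simp
next
  case (step y z)
  then show ?case by (meson adj_sym converse_rtranclp_into_rtranclp)
qed

definition P :: "'a set \<Rightarrow> 'a set set \<Rightarrow> nat" where
  "P V F = card {p \<in> V \<times> V. (adjacent F)\<^sup>*\<^sup>* (fst p) (snd p)}"

lemma adj_mono: "F1 \<subseteq> F \<Longrightarrow> (adjacent F1)\<^sup>*\<^sup>* u v \<Longrightarrow> (adjacent F)\<^sup>*\<^sup>* u v"
  by (metis (no_types, lifting) adjacent_def mono_rtranclp subsetD)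

lemma stayA:
  assumes sg: "simple_graph V E" and FE: "F \<subseteq> E"
    and C: "C = component V F v" and AB: "A \<union> B = C" "A \<inter> B = {}"
    and F1: "F1 = F - cut_edges (induced_edges F C) A B"
    and r: "(adjacent F1)\<^sup>*\<^sup>* a w" and a: "a \<in> A"
  shows "w \<in> A"
  using r
proof (induction rule: rtranclp_induct)
  case base then show ?case using a .
next
  case (step y z)
  have yz: "{y, z} \<in> F" "{y,z} \<notin> cut_edges (induced_edges F C) A B"
    using step(2) F1 by (auto simp: adjacent_def)
  have "{y,z} \<in> E" using yz FE by auto
  then have zV: "z \<in> V" and yzne: "y \<noteq> z" using sg unfolding simple_graph_def
    by (auto simp: card_insert_if split: if_splits)
  have yC: "y \<in> C" using step(3) AB by auto
  then have "(adjacent F)\<^sup>*\<^sup>* v y" using C by (simp add: component_def)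
  moreover have "adjacent F y z" using yz by (simp add: adjacent_def)
  ultimately have "(adjacent F)\<^sup>*\<^sup>* v z" by simp
  then have zC: "z \<in> C" using C zV by (simp add: component_def)
  show ?case
  proof (rule ccontr)
    assume "z \<notin> A"
    then have "z \<in> B" using zC AB by auto
    then have "{y,z} \<in> cut_edges (induced_edges F C) A B"
      using yz(1) yC zC step(3)
      by (auto simp: cut_edges_def induced_edges_def)
    then show False using yz(2) by simp
  qed
qed

lemma main:
  assumes sg: "simple_graph V E" and q: "q > 0"
  shows "F \<subseteq> E \<Longrightarrow> \<exists>F' \<subseteq> F. real (card (F - F')) \<le> q * (real (P V F) - real (P V F')) \<and>
           (\<forall>C \<in> components V F'. cut_dense q C (induced_edges F' C))"
proof (induction "P V F" arbitrary: F rule: less_induct)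
  case less
  have finV: "finite V" using sg by (simp add: simple_graph_def)
  have finE: "finite E"
  proof -
    have "E \<subseteq> Pow V" using sg by (auto simp: simple_graph_def)
    moreover have "finite (Pow V)" using finV by simp
    ultimately show ?thesis by (rule finite_subset)
  qed
  have finF: "finite F" using less(2) finE by (rule finite_subset)
  show ?case
  proof (cases "\<forall>C \<in> components V F. cut_dense q C (induced_edges F C)")
    case True
    have "F \<subseteq> F \<and> real (card (F - F)) \<le> q * (real (P V F) - real (P V F)) \<and>
      (\<forall>C \<in> components V F. cut_dense q C (induced_edges F C))" using True by simp
    then show ?thesis by blast
  next
    case False
    then obtain v where vV: "v \<in> V" and nd: "\<not> cut_dense q (component V F v) (induced_edges F (component V F v))"
      by (auto simp: components_def)
    define C where "C = component V F v"
    obtain A B where AB0: "A \<union> B = C \<and> A \<inter> B = {} \<and>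
       \<not> (real (card (cut_edges (induced_edges F C) A B)) \<ge> q * real (card A) * real (card B))"
      using nd unfolding cut_dense_def C_def by blast
    then have AB: "A \<union> B = C" "A \<inter> B = {}"
      and lt: "real (card (cut_edges (induced_edges F C) A B)) < q * real (card A) * real (card B)"
      by auto
    define D where "D = cut_edges (induced_edges F C) A B"
    define F1 where "F1 = F - D"
    have DF: "D \<subseteq> F" by (auto simp: D_def cut_edges_def induced_edges_def)
    have F1E: "F1 \<subseteq> E" using less(2) F1_def by auto
    define S where "S G = {p \<in> V \<times> V. (adjacent G)\<^sup>*\<^sup>* (fst p) (snd p)}" for G
    have finS: "finite (S G)" for G using finV unfolding S_def by simp
    have CV: "C \<subseteq> V" by (auto simp: C_def component_def)
    have ABS: "A \<times> B \<subseteq> S F"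
    proof
      fix p assume "p \<in> A \<times> B"
      then obtain a b where p: "p = (a,b)" "a \<in> C" "b \<in> C" using AB by auto
      then have "(adjacent F)\<^sup>*\<^sup>* v a" "(adjacent F)\<^sup>*\<^sup>* v b" by (auto simp: C_def component_def)
      then have "(adjacent F)\<^sup>*\<^sup>* a v" "(adjacent F)\<^sup>*\<^sup>* v b" by (auto intro: reach_sym)
      then have "(adjacent F)\<^sup>*\<^sup>* a b" by (rule rtranclp_trans)
      then show "p \<in> S F" using p CV by (auto simp: S_def)
    qed
    have S1: "S F1 \<subseteq> S F - A \<times> B"
    proof
      fix p assume pS: "p \<in> S F1"
      then have "(adjacent F)\<^sup>*\<^sup>* (fst p) (snd p)"
        using adj_mono[of F1 F] F1_def by (auto simp: S_def)
      moreover have "p \<notin> A \<times> B"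
      proof
        assume "p \<in> A \<times> B"
        then have "fst p \<in> A" "snd p \<in> B" by auto
        moreover have "(adjacent F1)\<^sup>*\<^sup>* (fst p) (snd p)" using pS by (simp add: S_def)
        ultimately have "snd p \<in> A"
          using stayA[OF sg less(2) C_def AB F1_def[unfolded D_def]] by blast
        then show False using \<open>snd p \<in> B\<close> AB by auto
      qed
      ultimately show "p \<in> S F - A \<times> B" using pS by (auto simp: S_def)
    qed
    have PS: "P V G = card (S G)" for G by (simp add: P_def S_def)
    have finAB: "finite (A \<times> B)" using ABS finS by (rule finite_subset)
    have e1: "card (S F1) \<le> card (S F - A \<times> B)" using S1 finS by (simp add: card_mono)
    have e2: "card (S F - A \<times> B) = card (S F) - card (A \<times> B)"
      using ABS finAB by (simp add: card_Diff_subset)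
    have e3: "card (A \<times> B) \<le> card (S F)" using finS ABS by (rule card_mono)
    have e4: "card (A \<times> B) = card A * card B" by (rule card_cartesian_product)
    have c1: "card (S F1) + card A * card B \<le> card (S F)"
      using e1 e2 e3 e4 by linarith
    have pos: "card A * card B > 0"
    proof -
      have "0 \<le> real (card (cut_edges (induced_edges F C) A B))" by simp
      then have "0 < q * (real (card A) * real (card B))" using lt by (simp add: mult.assoc)
      then have "real (card A) * real (card B) > 0" using q
        by (simp add: zero_less_mult_iff)
      then have "real (card A * card B) > 0" by simp
      then show ?thesis by linarith
    qed
    have "card (S F1) < card (S F)" using c1 pos by linarith
    then have "P V F1 < P V F" by (simp only: PS)
    from less(1)[OF this F1E] obtain F' where F': "F' \<subseteq> F1"
      "real (card (F1 - F')) \<le> q * (real (P V F1) - real (P V F'))"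
      "\<forall>C \<in> components V F'. cut_dense q C (induced_edges F' C)" by blast
    have split: "F - F' = D \<union> (F1 - F')" "D \<inter> (F1 - F') = {}" using DF F' F1_def by auto
    have "card (F - F') = card D + card (F1 - F')"
    proof -
      have "finite D" using DF finF by (rule finite_subset)
      moreover have "finite (F1 - F')" using finF F1_def by simp
      ultimately show ?thesis unfolding split(1) using split(2) by (rule card_Un_disjoint)
    qed
    then have "real (card (F - F')) = real (card D) + real (card (F1 - F'))" by simp
    also have "\<dots> \<le> q * real (card A * card B) + q * (real (P V F1) - real (P V F'))"
      using lt F'(2) D_def by (simp add: mult.assoc)
    also have "\<dots> = q * (real (card A * card B) + real (P V F1) - real (P V F'))"
      by (simp add: algebra_simps)
    also have "\<dots> \<le> q * (real (P V F) - real (P V F'))"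
    proof -
      have "real (card A * card B) + real (P V F1) \<le> real (P V F)"
        using c1 PS by (metis add.commute of_nat_add of_nat_le_iff)
      then show ?thesis using q by (intro mult_left_mono) auto
    qed
    finally show ?thesis using F' F1_def by (intro exI[of _ F']) auto
  qed
qed

theorem lemma3p13:
  fixes V :: "'a set" and E :: "'a set set" and q :: real
  assumes "simple_graph V E" and "q > 0"
  shows "\<exists>F \<subseteq> E. real (card (E - F)) \<le> q * real (card V) ^ 2 \<and>
           (\<forall>C \<in> components V F. cut_dense q C (induced_edges F C))"
proof -
  obtain F where F: "F \<subseteq> E" "real (card (E - F)) \<le> q * (real (P V E) - real (P V F))"
    "\<forall>C \<in> components V F. cut_dense q C (induced_edges F C)"
    using main[OF assms, of E] by blast
  have finV: "finite V" using assms(1) by (simp add: simple_graph_def)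
  have "P V E \<le> card (V \<times> V)" unfolding P_def using finV by (intro card_mono) auto
  then have "P V E \<le> card V * card V" by (simp add: card_cartesian_product)
  then have "real (P V E) \<le> real (card V) ^ 2" 
  proof -
    have "real (P V E) \<le> real (card V * card V)" using \<open>P V E \<le> card V * card V\<close> by (simp only: of_nat_le_iff)
    then show ?thesis by (simp add: power2_eq_square)
  qed
  then have "real (P V E) - real (P V F) \<le> real (card V) ^ 2"
    using of_nat_0_le_iff[of "P V F"] by linarith
  then have "q * (real (P V E) - real (P V F)) \<le> q * real (card V) ^ 2"
    using assms(2) by (intro mult_left_mono) auto
  then show ?thesis using F by (intro exI[of _ F]) auto
qed

end
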